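(* Let $k\ge3$ and $l\ge1$ be integers, and $G_{k,l}(T):=1-T+T^{lk+1}-T^{k(l+1)}$. If $\alpha\in\mathbb{C}$ satisfies $|\alpha|=1$ and $G_{k,l}(\alpha)=0$, then $\alpha^k=1$ or $\alpha^{k-2}=1$. *)

theory Defs
  imports Complex_Main
begin

definition G :: "nat \<Rightarrow> nat \<Rightarrow> complex \<Rightarrow> complex" where
  "G k l T = 1 - T + T ^ (l * k + 1) - T ^ (k * (l + 1))"

end

theory Submission
  imports Defs
begin

lemma norm_one_minus_sq:
  fixes z :: complex assumes "norm z = 1"
  shows "(norm (1 - z))^2 = 2 - 2 * Re z"
proof -
  have "(norm z)^2 = (Re z)^2 + (Im z)^2" by (simp add: cmod_power2)
  moreover have "(norm (1 - z))^2 = (1 - Re z)^2 + (Im z)^2" by (simp add: cmod_power2)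
  ultimately show ?thesis using assms by (simp add: power2_eq_square algebra_simps)
qed

lemma cnj_unit: fixes z :: complex assumes "norm z = 1" shows "cnj z = inverse z"
proof -
  have "z * cnj z = 1" using assms by (simp add: complex_norm_square[symmetric])
  moreover have "z \<noteq> 0" using assms by auto
  ultimately show ?thesis by (simp add: field_simps)
qed

theorem lemma14:
  fixes k l :: nat and \<alpha> :: complex
  assumes "k \<ge> 3" and "l \<ge> 1"
    and "norm \<alpha> = 1" and "G k l \<alpha> = 0"
  shows "\<alpha> ^ k = 1 \<or> \<alpha> ^ (k - 2) = 1"
proof -
  define m where "m = k - 1"
  define n where "n = l * k + 1"
  define \<beta> where "\<beta> = \<alpha> ^ m"
  have a0: "\<alpha> \<noteq> 0" using assms(3) by auto
  have kk: "k * (l + 1) = n + m" using assms(1) unfolding n_def m_def by (simp add: algebra_simps)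
  have pw: "\<alpha> ^ (k * (l + 1)) = \<alpha> ^ n * \<beta>" unfolding kk \<beta>_def by (simp add: power_add)
  have "0 = 1 - \<alpha> + \<alpha> ^ n - \<alpha> ^ n * \<beta>"
    using assms(4) unfolding G_def pw by (simp add: n_def)
  hence eq: "1 - \<alpha> = \<alpha> ^ n * (\<beta> - 1)" by (simp add: algebra_simps)
  have nb: "norm \<beta> = 1" unfolding \<beta>_def using assms(3) by (simp add: norm_power)
  have "norm (1 - \<alpha>) = norm (1 - \<beta>)"
    using eq assms(3) by (simp add: norm_mult norm_power norm_minus_commute)
  hence "(norm (1 - \<alpha>))^2 = (norm (1 - \<beta>))^2" by simp
  hence re: "Re \<alpha> = Re \<beta>" using norm_one_minus_sq[OF assms(3)] norm_one_minus_sq[OF nb] by simp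
  have "\<alpha> + cnj \<alpha> = \<beta> + cnj \<beta>" using re by (simp add: complex_add_cnj)
  hence "\<alpha> + inverse \<alpha> = \<beta> + inverse \<beta>" using cnj_unit[OF assms(3)] cnj_unit[OF nb] by simp
  moreover have b0: "\<beta> \<noteq> 0" using nb by auto
  ultimately have "(\<beta> - \<alpha>) * (\<alpha> * \<beta> - 1) = 0" using a0
    by (simp add: field_simps)
  hence "\<beta> = \<alpha> \<or> \<alpha> * \<beta> = 1" by simp
  moreover have "\<alpha> * \<beta> = \<alpha> ^ k"
  proof -
    have "k = Suc m" unfolding m_def using assms(1) by simp
    thus ?thesis unfolding \<beta>_def by simp
  qed
  moreover have "\<beta> = \<alpha> * \<alpha> ^ (k - 2)"
  proof -
    have "m = Suc (k - 2)" unfolding m_def using assms(1) by simp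
    thus ?thesis unfolding \<beta>_def by simp
  qed
  ultimately show ?thesis using a0 by auto
qed

end
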